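(* Under the model below, for every batch $h$ and every packet index $k$ in that batch, $$\hat d_h^k - d_h^k \le \frac{(2M-1)L}{Nr},$$ i.e. every packet departs under MPGPS at most $(2M-1)L/(Nr)$ time units later than it departs under GPS.
   Context: Model. There are $K$ users (sessions) with separate FIFO queues, and $N$ servers (subcarriers), each transmitting $r$ bits per unit time, so the total service rate is $Nr$. All packets have the same length $L$ bits. Transmissions are error free. The same packet arrival sequence is fed to two systems. GPS (generalized processor sharing): a fluid system of total rate $Nr$; each user $k$ has a weight $\phi_k>0$, and at every instant each backlogged user $k$ is served at rate $Nr\,\phi_k/\sum_{j\in B}\phi_j$, where $B$ is the set of currently backlogged users. A packet's GPS departure time is the time its last bit is served in GPS. MPGPS (multi-server packetized GPS) with parameter $M\ge 1$: it is work conserving (servers are never idle while packets are queued). Whenever the servers become idle at a time $\tau$, among all packets queued at $\tau$ it selects the $\min\big(M,\sum_{k}\hat Q_k(\tau)\big)$ packets that would be the first to complete service in the corresponding GPS system if no further packets arrived after $\tau$ ($\hat Q_k(\tau)$ is the number of user-$k$ packets queued under MPGPS at $\tau$). These selected packets form one batch; a batch of $M_h$ packets is transmitted jointly over all $N$ servers, occupies the servers for $M_hL/(Nr)$ time units, and all its packets depart at the end of that period. Batches are indexed $h=1,2,\dots$; $f_h^k$ denotes the $k$-th packet of batch $h$, $\hat d_h^k$ its departure time under MPGPS, and $d_h^k$ its departure time under GPS. *)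

theory Defs
  imports "HOL-Analysis.Analysis"
begin

text \<open>Packets are elements of a type 'p, linearly ordered by their position in the
arrival sequence (used only to break ties between packets of one user arriving at
the same instant).  a p = arrival time, u p = user (session) of packet p.
Users are 0..K-1.  All packets have length L bits.\<close>

definition arrived_work :: "real \<Rightarrow> ('p \<Rightarrow> real) \<Rightarrow> ('p \<Rightarrow> nat) \<Rightarrow> 'p set \<Rightarrow> nat \<Rightarrow> real \<Rightarrow> real" where
  "arrived_work L a u P k t = L * real (card {p \<in> P. u p = k \<and> a p \<le> t})"

definition gps_rate :: "nat \<Rightarrow> real \<Rightarrow> (nat \<Rightarrow> real) \<Rightarrow> nat \<Rightarrow> (nat \<Rightarrow> real \<Rightarrow> real)
    \<Rightarrow> (nat \<Rightarrow> real \<Rightarrow> real) \<Rightarrow> nat \<Rightarrow> real \<Rightarrow> real" where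
  "gps_rate N r \<phi> K A S k s =
     (if S k s < A k s
      then real N * r * \<phi> k / (\<Sum>j\<in>{j. j < K \<and> S j s < A j s}. \<phi> j)
      else 0)"

definition is_gps :: "nat \<Rightarrow> real \<Rightarrow> (nat \<Rightarrow> real) \<Rightarrow> nat \<Rightarrow> (nat \<Rightarrow> real \<Rightarrow> real)
    \<Rightarrow> (nat \<Rightarrow> real \<Rightarrow> real) \<Rightarrow> bool" where
  "is_gps N r \<phi> K A S \<longleftrightarrow>
     (\<forall>k<K. \<forall>t\<ge>0. (gps_rate N r \<phi> K A S k has_integral S k t) {0..t})"

definition fifo_pos :: "('p::linorder \<Rightarrow> real) \<Rightarrow> ('p \<Rightarrow> nat) \<Rightarrow> 'p set \<Rightarrow> 'p \<Rightarrow> nat" where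
  "fifo_pos a u P p = card {q \<in> P. u q = u p \<and> (a q < a p \<or> (a q = a p \<and> q \<le> p))}"

text \<open>GPS departure time: the time the last bit of p is served (service of its user
reaches fifo_pos * L).\<close>
definition gps_departure :: "real \<Rightarrow> ('p::linorder \<Rightarrow> real) \<Rightarrow> ('p \<Rightarrow> nat) \<Rightarrow> 'p set
    \<Rightarrow> (nat \<Rightarrow> real \<Rightarrow> real) \<Rightarrow> 'p \<Rightarrow> real" where
  "gps_departure L a u P S p = Inf {t. 0 \<le> t \<and> real (fifo_pos a u P p) * L \<le> S (u p) t}"

text \<open>MPGPS: batch h (h = 0,1,2,... corresponds to the paper's h = 1,2,...) starts at tau h
and consists of the packet set F h.\<close>
definition batch_end :: "nat \<Rightarrow> real \<Rightarrow> real \<Rightarrow> (nat \<Rightarrow> real) \<Rightarrow> (nat \<Rightarrow> 'p set) \<Rightarrow> nat \<Rightarrow> real" where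
  "batch_end N r L tau F h = tau h + real (card (F h)) * L / (real N * r)"

definition prev_end :: "nat \<Rightarrow> real \<Rightarrow> real \<Rightarrow> (nat \<Rightarrow> real) \<Rightarrow> (nat \<Rightarrow> 'p set) \<Rightarrow> nat \<Rightarrow> real" where
  "prev_end N r L tau F h = (if h = 0 then 0 else batch_end N r L tau F (h - 1))"

definition mpgps_queue :: "('p \<Rightarrow> real) \<Rightarrow> (nat \<Rightarrow> 'p set) \<Rightarrow> nat \<Rightarrow> real \<Rightarrow> 'p set" where
  "mpgps_queue a F h t = {p. a p \<le> t \<and> p \<notin> (\<Union>h'<h. F h')}"

text \<open>gps P : service curves of the GPS system fed only with the packets in P.
The hypothetical departure times at decision instant tau are those of the GPS system
fed with the packets arrived by tau (no further arrivals).\<close>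
definition is_mpgps :: "nat \<Rightarrow> real \<Rightarrow> real \<Rightarrow> nat \<Rightarrow> ('p::linorder \<Rightarrow> real) \<Rightarrow> ('p \<Rightarrow> nat)
    \<Rightarrow> ('p set \<Rightarrow> nat \<Rightarrow> real \<Rightarrow> real) \<Rightarrow> (nat \<Rightarrow> real) \<Rightarrow> (nat \<Rightarrow> 'p set) \<Rightarrow> bool" where
  "is_mpgps N r L M a u gps tau F \<longleftrightarrow>
    (\<forall>h. let e = prev_end N r L tau F h;
             Q = mpgps_queue a F h (tau h);
             P = {x. a x \<le> tau h};
             hd = gps_departure L a u P (gps P)
         in if (\<exists>t\<ge>e. mpgps_queue a F h t \<noteq> {})
            then e \<le> tau h \<and> Q \<noteq> {}
                 \<and> (\<forall>t. e \<le> t \<and> t < tau h \<longrightarrow> mpgps_queue a F h t = {})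
                 \<and> F h \<subseteq> Q \<and> card (F h) = min M (card Q)
                 \<and> (\<forall>p\<in>F h. \<forall>q\<in>Q - F h. hd p \<le> hd q)
            else F h = {})"

end

theory Submission
  imports Defs
begin


lemma aux_mul: fixes c x e :: real assumes "0 < c" "x \<le> e / c" shows "c * x \<le> e"
  using assms by (simp add: le_divide_eq mult.commute)

locale gpsys =
  fixes N :: nat and r :: real and \<phi> :: "nat \<Rightarrow> real" and K :: nat
    and A :: "nat \<Rightarrow> real \<Rightarrow> real" and S :: "nat \<Rightarrow> real \<Rightarrow> real"
  assumes N1: "N \<ge> 1" and rpos: "r > 0" and phipos: "\<And>k. k < K \<Longrightarrow> \<phi> k > 0"
    and gps: "is_gps N r \<phi> K A S"
    and Amono: "\<And>k s t. s \<le> t \<Longrightarrow> A k s \<le> A k t"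
    and Anonneg: "\<And>k t. 0 \<le> A k t"
begin

abbreviation C where "C \<equiv> real N * r"
abbreviation rate where "rate k \<equiv> gps_rate N r \<phi> K A S k"

lemma Cpos: "C > 0" using N1 rpos by simp

lemma Bsum_pos:
  assumes "k < K" "S k s < A k s"
  shows "\<phi> k \<le> (\<Sum>j\<in>{j. j < K \<and> S j s < A j s}. \<phi> j)"
proof -
  have "(\<Sum>j\<in>{k}. \<phi> j) \<le> (\<Sum>j\<in>{j. j < K \<and> S j s < A j s}. \<phi> j)"
    by (rule sum_mono2) (use assms phipos in \<open>auto intro: less_imp_le\<close>)
  then show ?thesis by simp
qed

lemma rate_nonneg: assumes "k < K" shows "0 \<le> rate k s"
proof (cases "S k s < A k s")
  case True
  have "\<phi> k \<le> (\<Sum>j\<in>{j. j < K \<and> S j s < A j s}. \<phi> j)" using Bsum_pos assms True by auto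
  then have "0 < (\<Sum>j\<in>{j. j < K \<and> S j s < A j s}. \<phi> j)" using phipos[OF assms] by linarith
  then show ?thesis using True Cpos phipos[OF assms] by (simp add: gps_rate_def)
qed (simp add: gps_rate_def)

lemma rate_le: assumes "k < K" shows "rate k s \<le> C"
proof (cases "S k s < A k s")
  case True
  have p: "\<phi> k > 0" using phipos assms by auto
  have b: "\<phi> k \<le> (\<Sum>j\<in>{j. j < K \<and> S j s < A j s}. \<phi> j)" using Bsum_pos assms True by auto
  have "C * \<phi> k / (\<Sum>j\<in>{j. j < K \<and> S j s < A j s}. \<phi> j) \<le> C"
    using p b Cpos by (simp add: divide_le_eq mult_left_mono)
  then show ?thesis using True by (simp add: gps_rate_def)
next
  case False then show ?thesis using Cpos by (simp add: gps_rate_def)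
qed

lemma rate_lower:
  assumes "k < K" "S k s < A k s"
  shows "C * \<phi> k / (\<Sum>j<K. \<phi> j) \<le> rate k s"
proof -
  have p: "\<phi> k > 0" using phipos assms by auto
  have b: "\<phi> k \<le> (\<Sum>j\<in>{j. j < K \<and> S j s < A j s}. \<phi> j)" using Bsum_pos assms by auto
  have c: "(\<Sum>j\<in>{j. j < K \<and> S j s < A j s}. \<phi> j) \<le> (\<Sum>j<K. \<phi> j)"
    by (rule sum_mono2) (use phipos in \<open>auto intro: less_imp_le\<close>)
  have "C * \<phi> k / (\<Sum>j<K. \<phi> j) \<le> C * \<phi> k / (\<Sum>j\<in>{j. j < K \<and> S j s < A j s}. \<phi> j)"
    apply (rule divide_left_mono) using p b c Cpos by auto
  then show ?thesis using assms by (simp add: gps_rate_def)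
qed

lemma rate_ratio:
  assumes "k < K" "j < K" "S k s < A k s" "S j s < A j s"
  shows "rate k s / \<phi> k = rate j s / \<phi> j"
  using assms phipos[of k] phipos[of j] by (simp add: gps_rate_def)

lemma rate_sum: "(\<Sum>k<K. rate k s) \<le> C"
proof -
  let ?B = "{j. j < K \<and> S j s < A j s}"
  have eq: "(\<Sum>k<K. rate k s) = (\<Sum>k\<in>?B. C * \<phi> k / (\<Sum>j\<in>?B. \<phi> j))"
  proof -
    have "(\<Sum>k<K. rate k s) = (\<Sum>k\<in>{..<K}. if S k s < A k s then C * \<phi> k / (\<Sum>j\<in>?B. \<phi> j) else 0)"
      unfolding gps_rate_def by simp
    also have "\<dots> = (\<Sum>k\<in>{k\<in>{..<K}. S k s < A k s}. C * \<phi> k / (\<Sum>j\<in>?B. \<phi> j))"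
      by (rule sum.inter_filter[symmetric]) simp
    also have "{k\<in>{..<K}. S k s < A k s} = ?B" by auto
    finally show ?thesis .
  qed
  show ?thesis
  proof (cases "?B = {}")
    case True then show ?thesis using eq Cpos by (simp only:) simp
  next
    case False
    then obtain k where k: "k \<in> ?B" by auto
    have "\<phi> k \<le> (\<Sum>j\<in>?B. \<phi> j)" using Bsum_pos k by auto
    then have pos: "(\<Sum>j\<in>?B. \<phi> j) > 0" using phipos k by force
    have "(\<Sum>k\<in>?B. C * \<phi> k / (\<Sum>j\<in>?B. \<phi> j)) = C * (\<Sum>k\<in>?B. \<phi> k) / (\<Sum>j\<in>?B. \<phi> j)"
      by (simp add: sum_divide_distrib[symmetric] sum_distrib_left)
    also have "\<dots> = C" using pos by simp
    finally show ?thesis using eq by simp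
  qed
qed

lemma S0: "k < K \<Longrightarrow> S k 0 = 0"
proof -
  assume k: "k < K"
  have "\<forall>t\<ge>0. (rate k has_integral S k t) {0..t}" using gps k unfolding is_gps_def by blast
  then have "(rate k has_integral S k 0) {0..0}" by blast
  then have "(rate k has_integral S k 0) {0}" by simp
  moreover have "(rate k has_integral 0) {0::real}" by (rule has_integral_refl(2))
  ultimately show ?thesis using has_integral_unique by blast
qed

lemma intv:
  assumes "k < K" "0 \<le> s" "s \<le> t"
  shows "(rate k has_integral (S k t - S k s)) {s..t}"
proof -
  have t: "(rate k has_integral S k t) {0..t}" and s: "(rate k has_integral S k s) {0..s}"
    using gps assms unfolding is_gps_def by auto
  have "rate k integrable_on {s..t}"
    by (rule integrable_subinterval_real[of _ 0 t]) (use t assms in auto)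
  then obtain I where I: "(rate k has_integral I) {s..t}" by blast
  have "(rate k has_integral (S k s + I)) {0..t}"
    by (rule has_integral_combine[OF assms(2,3) s I])
  then have "S k t = S k s + I" using t has_integral_unique by blast
  then show ?thesis using I by simp
qed

lemma mono: "k < K \<Longrightarrow> 0 \<le> s \<Longrightarrow> s \<le> t \<Longrightarrow> S k s \<le> S k t"
  using has_integral_nonneg[OF intv] rate_nonneg by fastforce

lemma lip: "k < K \<Longrightarrow> 0 \<le> s \<Longrightarrow> s \<le> t \<Longrightarrow> S k t - S k s \<le> C * (t - s)"
proof -
  assume a: "k < K" "0 \<le> s" "s \<le> t"
  have "((\<lambda>x. C) has_integral C * (t - s)) {s..t}"
    using has_integral_const_real[of C s t] a by (simp add: mult.commute)
  then show ?thesis using has_integral_le[OF intv[OF a]] rate_le a by auto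
qed

lemma Snonneg: "k < K \<Longrightarrow> 0 \<le> t \<Longrightarrow> 0 \<le> S k t"
  using mono[of k 0 t] S0 by simp

lemma sum_lip: "0 \<le> s \<Longrightarrow> s \<le> t \<Longrightarrow> (\<Sum>k<K. S k t - S k s) \<le> C * (t - s)"
proof -
  assume a: "0 \<le> s" "s \<le> t"
  have "((\<lambda>x. \<Sum>k<K. rate k x) has_integral (\<Sum>k<K. S k t - S k s)) {s..t}"
    by (rule has_integral_sum) (use intv a in auto)
  moreover have "((\<lambda>x. C) has_integral C * (t - s)) {s..t}"
    using has_integral_const_real[of C s t] a by (simp add: mult.commute)
  ultimately show ?thesis using has_integral_le rate_sum by blast
qed


lemma S_le_A:
  assumes k: "k < K" and t: "0 \<le> t"
  shows "S k t \<le> A k t"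
proof (rule ccontr)
  assume neg: "\<not> S k t \<le> A k t"
  define Z where "Z = {s. 0 \<le> s \<and> s \<le> t \<and> S k s \<le> A k t}"
  have Z0: "0 \<in> Z" unfolding Z_def using t S0[OF k] Anonneg by auto
  have bdd: "bdd_above Z" unfolding Z_def by (auto intro: bdd_aboveI[of _ t])
  define s0 where "s0 = Sup Z"
  have s0ge: "0 \<le> s0" unfolding s0_def using Z0 bdd by (rule cSup_upper)
  have s0le: "s0 \<le> t" unfolding s0_def using Z0 by (intro cSup_least) (auto simp: Z_def)
  have Ss0: "S k s0 \<le> A k t"
  proof (rule field_le_epsilon)
    fix e :: real assume e: "0 < e"
    have lt0: "s0 - e / C < s0" using e Cpos by simp
    have "\<exists>z\<in>Z. s0 - e / C < z" using less_cSup_iff[of Z "s0 - e / C"] Z0 bdd lt0 unfolding s0_def by blast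
    then obtain z where z: "z \<in> Z" "s0 - e / C < z" by blast
    have zle: "z \<le> s0" unfolding s0_def using z(1) bdd by (rule cSup_upper)
    have "S k s0 - S k z \<le> C * (s0 - z)" using lip[OF k, of z s0] z zle by (auto simp: Z_def)
    also have "\<dots> \<le> e" using z(2) Cpos by (intro aux_mul) auto
    finally show "S k s0 \<le> A k t + e" using z(1) by (auto simp: Z_def)
  qed
  have lt: "s0 < t" using Ss0 neg s0le by (cases "s0 = t") auto
  have r0: "rate k x = 0" if "x \<in> {s0..t} - {s0}" for x
  proof -
    have x: "s0 < x" "x \<le> t" using that by auto
    have "x \<notin> Z" using x bdd cSup_upper[of x Z] s0_def by force
    then have "S k x > A k t" using x s0ge unfolding Z_def by auto
    moreover have "A k x \<le> A k t" using Amono x by auto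
    ultimately show ?thesis by (simp add: gps_rate_def)
  qed
  have "((\<lambda>x. 0) has_integral (S k t - S k s0)) {s0..t}"
    by (rule has_integral_spike_finite[of "{s0}" _ _ "rate k"]) (use r0 intv[OF k s0ge s0le] in auto)
  then have "S k t - S k s0 = 0" using has_integral_unique has_integral_0 by blast
  then show False using Ss0 neg by simp
qed

lemma S_le_strict:
  assumes k: "k < K" and t0: "0 \<le> t0" and m: "0 \<le> m"
    and le: "\<And>s. 0 \<le> s \<Longrightarrow> s < t0 \<Longrightarrow> A k s \<le> m"
  shows "S k t0 \<le> m"
proof (cases "t0 = 0")
  case True then show ?thesis using S0[OF k] m by simp
next
  case False
  show ?thesis
  proof (rule field_le_epsilon)
    fix e :: real assume e: "0 < e"
    define s where "s = max 0 (t0 - e / C)"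
    have s: "0 \<le> s" "s < t0" "s \<le> t0" using False t0 e Cpos by (auto simp: s_def)
    have "S k t0 - S k s \<le> C * (t0 - s)" using lip[OF k s(1) s(3)] .
    also have "\<dots> \<le> e" using Cpos e by (auto simp: s_def field_simps max_def)
    finally show "S k t0 \<le> m + e" using S_le_A[OF k s(1)] le[OF s(1,2)] by simp
  qed
qed

lemma live:
  assumes k: "k < K" and t1: "0 \<le> t1" and T: "\<And>t. t1 \<le> t \<Longrightarrow> T \<le> A k t"
  shows "\<exists>t\<ge>0. T \<le> S k t"
proof (rule ccontr)
  assume "\<not> ?thesis"
  then have lt: "\<And>t. 0 \<le> t \<Longrightarrow> S k t < T" by force
  define c where "c = C * \<phi> k / (\<Sum>j<K. \<phi> j)"
  have "\<phi> k \<le> (\<Sum>j<K. \<phi> j)"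
  proof -
    have "(\<Sum>j\<in>{k}. \<phi> j) \<le> (\<Sum>j<K. \<phi> j)"
      by (rule sum_mono2) (use k phipos in \<open>auto intro: less_imp_le\<close>)
    then show ?thesis by simp
  qed
  then have c: "c > 0" using phipos[OF k] Cpos unfolding c_def by (auto intro!: divide_pos_pos)
  define t where "t = t1 + \<bar>T\<bar> / c + 1"
  have tt: "t1 \<le> t" using c by (simp add: t_def)
  have "((\<lambda>x. c) has_integral c * (t - t1)) {t1..t}"
    using has_integral_const_real[of c t1 t] tt by (simp add: mult.commute)
  moreover have "c \<le> rate k x" if "x \<in> {t1..t}" for x
    unfolding c_def using rate_lower[OF k] lt[of x] T[of x] that t1 by force
  ultimately have "c * (t - t1) \<le> S k t - S k t1"
    using has_integral_le[OF _ intv[OF k t1 tt]] by blast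
  moreover have "c * (t - t1) = \<bar>T\<bar> + c" using c by (simp add: t_def field_simps)
  moreover have "S k t1 \<ge> 0" using Snonneg[OF k t1] .
  moreover have "S k t < T" using lt tt t1 by simp
  ultimately show False using c by linarith
qed

definition dep where "dep T k = Inf {t. 0 \<le> t \<and> T \<le> S k t}"

lemma dep_props:
  assumes k: "k < K" and ex: "\<exists>t\<ge>0. T \<le> S k t" and T: "T > 0"
  shows "0 \<le> dep T k" "S k (dep T k) = T"
    "\<And>t. 0 \<le> t \<Longrightarrow> t < dep T k \<Longrightarrow> S k t < T"
    "\<And>t. 0 \<le> t \<Longrightarrow> T \<le> S k t \<Longrightarrow> dep T k \<le> t"
proof -
  let ?X = "{t. 0 \<le> t \<and> T \<le> S k t}"
  have ne: "?X \<noteq> {}" using ex by auto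
  have bdd: "bdd_below ?X" by (auto intro: bdd_belowI[of _ 0])
  show D0: "0 \<le> dep T k" unfolding dep_def using ne by (intro cInf_greatest) auto
  show low: "\<And>t. 0 \<le> t \<Longrightarrow> T \<le> S k t \<Longrightarrow> dep T k \<le> t"
    unfolding dep_def using bdd by (intro cInf_lower) auto
  show bef: "\<And>t. 0 \<le> t \<Longrightarrow> t < dep T k \<Longrightarrow> S k t < T"
    using low by force
  have ge: "T \<le> S k (dep T k)"
  proof (rule field_le_epsilon)
    fix e :: real assume e: "0 < e"
    have lt0: "dep T k < dep T k + e / C" using e Cpos by simp
    have "\<exists>z\<in>?X. z < dep T k + e / C"
      using cInf_less_iff[OF ne bdd, of "dep T k + e / C"] lt0 unfolding dep_def by blast
    then obtain z where z: "z \<in> ?X" "z < dep T k + e / C" by blast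
    have zle: "dep T k \<le> z" using low z(1) by auto
    have "S k z - S k (dep T k) \<le> C * (z - dep T k)" using lip[OF k D0 zle] .
    also have "\<dots> \<le> e" using z(2) Cpos by (intro aux_mul) auto
    finally show "T \<le> S k (dep T k) + e" using z(1) by auto
  qed
  have pos: "dep T k > 0"
  proof (rule ccontr)
    assume "\<not> dep T k > 0"
    then have "dep T k = 0" using D0 by simp
    then show False using ge S0[OF k] T by simp
  qed
  have le: "S k (dep T k) \<le> T"
  proof (rule field_le_epsilon)
    fix e :: real assume e: "0 < e"
    define s where "s = max 0 (dep T k - e / C)"
    have s: "0 \<le> s" "s < dep T k" "s \<le> dep T k" using pos e Cpos by (auto simp: s_def)
    have "S k (dep T k) - S k s \<le> C * (dep T k - s)" using lip[OF k s(1) s(3)] .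
    also have "\<dots> \<le> e" using Cpos e by (auto simp: s_def field_simps max_def)
    finally show "S k (dep T k) \<le> T + e" using bef[OF s(1,2)] by simp
  qed
  show "S k (dep T k) = T" using ge le by simp
qed

lemma norm_eq:
  assumes k: "k < K" and j: "j < K" and s: "0 \<le> s" "s \<le> t"
    and bl: "\<And>x. s \<le> x \<Longrightarrow> x < t \<Longrightarrow> S k x < A k x \<and> S j x < A j x"
  shows "(S k t - S k s) / \<phi> k = (S j t - S j s) / \<phi> j"
proof -
  have X: "((\<lambda>x. rate k x / \<phi> k - rate j x / \<phi> j) has_integral
          ((S k t - S k s) / \<phi> k - (S j t - S j s) / \<phi> j)) {s..t}"
    by (intro has_integral_diff has_integral_divide intv k j s)
  have "((\<lambda>x. 0) has_integral
          ((S k t - S k s) / \<phi> k - (S j t - S j s) / \<phi> j)) {s..t}"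
    by (rule has_integral_spike_finite[OF _ _ X, where S="{t}"])
       (use rate_ratio[OF k j] bl in auto)
  then have "(S k t - S k s) / \<phi> k - (S j t - S j s) / \<phi> j = 0"
    using has_integral_unique has_integral_0 by blast
  then show ?thesis by simp
qed

end




lemma gps_agree:
  assumes s1: "gpsys N r \<phi> K A S" and s2: "gpsys N r \<phi> K A' S'"
    and eqA: "\<And>k t. k < K \<Longrightarrow> 0 \<le> t \<Longrightarrow> t \<le> \<tau> \<Longrightarrow> A' k t = A k t"
    and rlc: "\<And>t0. 0 \<le> t0 \<Longrightarrow> \<exists>e>0. \<forall>k<K. \<forall>t. t0 \<le> t \<and> t < t0 + e \<longrightarrow> A k t = A k t0"
  shows "\<forall>k<K. \<forall>t. 0 \<le> t \<and> t \<le> \<tau> \<longrightarrow> S k t = S' k t"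
proof (rule ccontr)
  interpret I1: gpsys N r \<phi> K A S by (rule s1)
  interpret I2: gpsys N r \<phi> K A' S' by (rule s2)
  let ?C = "real N * r"
  have Cpos: "?C > 0" by (rule I1.Cpos)
  assume neg: "\<not> ?thesis"
  define Z where "Z = {t. 0 \<le> t \<and> t \<le> \<tau> \<and> (\<exists>k<K. S k t \<noteq> S' k t)}"
  have ne: "Z \<noteq> {}" using neg unfolding Z_def by auto
  have bdd: "bdd_below Z" unfolding Z_def by (auto intro: bdd_belowI[of _ 0])
  define t0 where "t0 = Inf Z"
  have t0ge: "0 \<le> t0" unfolding t0_def using ne by (intro cInf_greatest) (auto simp: Z_def)
  have t0le: "t0 \<le> \<tau>"
  proof -
    obtain z where "z \<in> Z" using ne by auto
    then show ?thesis unfolding t0_def using bdd cInf_lower[of z Z] by (auto simp: Z_def)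
  qed
  have before: "S k t = S' k t" if "k < K" "0 \<le> t" "t < t0" for k t
  proof (rule ccontr)
    assume "S k t \<noteq> S' k t"
    then have "t \<in> Z" using that t0le unfolding Z_def by auto
    then have "t0 \<le> t" unfolding t0_def using bdd by (rule cInf_lower)
    then show False using that by simp
  qed
  have at: "S k t0 = S' k t0" if k: "k < K" for k
  proof (cases "t0 = 0")
    case True then show ?thesis using I1.S0[OF k] I2.S0[OF k] by simp
  next
    case False
    have "\<bar>S k t0 - S' k t0\<bar> \<le> 0"
    proof (rule field_le_epsilon)
      fix e :: real assume e: "0 < e"
      define s where "s = max 0 (t0 - e / (2 * ?C))"
      have s: "0 \<le> s" "s < t0" "s \<le> t0" using False t0ge e Cpos by (auto simp: s_def)
      have d: "t0 - s \<le> e / (2 * ?C)" by (simp add: s_def)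
      have "?C * (t0 - s) \<le> e / 2" using aux_mul[OF Cpos, of "t0 - s" "e/2"] d by simp
      moreover have "S k t0 - S k s \<le> ?C * (t0 - s)" using I1.lip[OF k s(1) s(3)] .
      moreover have "S' k t0 - S' k s \<le> ?C * (t0 - s)" using I2.lip[OF k s(1) s(3)] .
      moreover have "S k s \<le> S k t0" using I1.mono[OF k s(1) s(3)] .
      moreover have "S' k s \<le> S' k t0" using I2.mono[OF k s(1) s(3)] .
      moreover have "S k s = S' k s" using before[OF k s(1,2)] .
      ultimately show "\<bar>S k t0 - S' k t0\<bar> \<le> 0 + e" by linarith
    qed
    then show ?thesis by simp
  qed
  obtain e1 where e1: "e1 > 0" "\<And>k t. k < K \<Longrightarrow> t0 \<le> t \<Longrightarrow> t < t0 + e1 \<Longrightarrow> A k t = A k t0"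
    using rlc[OF t0ge] by blast
  define Bk where "Bk = {k. k < K \<and> S k t0 < A k t0}"
  define g where "g = Min (insert 1 ((\<lambda>k. A k t0 - S k t0) ` Bk))"
  have finB: "finite Bk" unfolding Bk_def by auto
  have gpos: "g > 0" unfolding g_def using finB by (subst Min_gr_iff) (auto simp: Bk_def)
  have gle: "g \<le> A k t0 - S k t0" if "k \<in> Bk" for k
    unfolding g_def using finB that by (intro Min_le) auto
  define \<epsilon> where "\<epsilon> = min e1 (g / (2 * ?C))"
  have epos: "\<epsilon> > 0" unfolding \<epsilon>_def using e1 gpos Cpos by auto
  have key: "S k t = S' k t" if t: "t0 \<le> t" "t < t0 + \<epsilon>" "t \<le> \<tau>" and k: "k < K" for t k
  proof -
    have status: "(S j x < A j x) = (S' j x < A' j x)" if x: "x \<in> {t0..t}" and j: "j < K" for x j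
    proof -
      have x0: "0 \<le> x" "x \<le> \<tau>" "t0 \<le> x" "x < t0 + e1" using x t t0ge \<epsilon>_def by auto
      have AA: "A' j x = A j x" using eqA[OF j x0(1,2)] .
      have Ax: "A j x = A j t0" using e1(2)[OF j x0(3,4)] .
      show ?thesis
      proof (cases "j \<in> Bk")
        case True
        have "x - t0 \<le> g / (2 * ?C)" using x t \<epsilon>_def by auto
        then have c: "?C * (x - t0) \<le> g / 2" using aux_mul[OF Cpos, of "x - t0" "g/2"] by simp
        have "S j x - S j t0 \<le> ?C * (x - t0)" using I1.lip[OF j t0ge x0(3)] .
        moreover have "S' j x - S' j t0 \<le> ?C * (x - t0)" using I2.lip[OF j t0ge x0(3)] .
        moreover have "S' j t0 = S j t0" using at[OF j] by simp
        moreover have "g \<le> A j t0 - S j t0" using gle[OF True] .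
        ultimately have "S j x < A j x" "S' j x < A' j x" using c gpos AA Ax by linarith+
        then show ?thesis by simp
      next
        case False
        then have "A j t0 \<le> S j t0" using j unfolding Bk_def by auto
        moreover have "S j t0 \<le> S j x" using I1.mono[OF j t0ge x0(3)] .
        moreover have "S' j t0 \<le> S' j x" using I2.mono[OF j t0ge x0(3)] .
        moreover have "S' j t0 = S j t0" using at[OF j] by simp
        ultimately have "\<not> S j x < A j x" "\<not> S' j x < A' j x" using AA Ax by linarith+
        then show ?thesis by simp
      qed
    qed
    have req: "gps_rate N r \<phi> K A S k x = gps_rate N r \<phi> K A' S' k x" if x: "x \<in> {t0..t}" for x
    proof -
      have "{j. j < K \<and> S j x < A j x} = {j. j < K \<and> S' j x < A' j x}" using status[OF x] by blast
      then show ?thesis using status[OF x k] unfolding gps_rate_def by simp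
    qed
    have "(gps_rate N r \<phi> K A' S' k has_integral (S k t - S k t0)) {t0..t}"
      by (rule has_integral_eq[OF req I1.intv[OF k t0ge t(1)]])
    moreover have "(gps_rate N r \<phi> K A' S' k has_integral (S' k t - S' k t0)) {t0..t}"
      by (rule I2.intv[OF k t0ge t(1)])
    ultimately have "S k t - S k t0 = S' k t - S' k t0" by (rule has_integral_unique)
    then show ?thesis using at[OF k] by simp
  qed
  have lt0: "t0 < t0 + \<epsilon>" using epos by simp
  have "\<exists>z\<in>Z. z < t0 + \<epsilon>" using cInf_less_iff[OF ne bdd, of "t0 + \<epsilon>"] lt0 unfolding t0_def by blast
  then obtain z where z: "z \<in> Z" "z < t0 + \<epsilon>" by blast
  have "t0 \<le> z" unfolding t0_def using z(1) bdd by (rule cInf_lower)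
  then show False using key[of z] z unfolding Z_def by auto
qed




locale model =
  fixes K N :: nat and r L :: real and \<phi> :: "nat \<Rightarrow> real"
    and a :: "'p::linorder \<Rightarrow> real" and u :: "'p \<Rightarrow> nat"
    and gps :: "'p set \<Rightarrow> nat \<Rightarrow> real \<Rightarrow> real"
  assumes N1: "N \<ge> 1" and rpos: "r > 0" and Lpos: "L > 0"
    and phipos: "\<And>k. k < K \<Longrightarrow> \<phi> k > 0"
    and uK: "\<And>p. u p < K" and apos: "\<And>p. a p \<ge> 0"
    and fin: "\<And>t. finite {p. a p \<le> t}"
    and isg: "\<And>P. is_gps N r \<phi> K (arrived_work L a u P) (gps P)"
begin

abbreviation C where "C \<equiv> real N * r"
abbreviation AW where "AW P \<equiv> arrived_work L a u P"
abbreviation TG where "TG P p \<equiv> real (fifo_pos a u P p) * L"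
abbreviation DP where "DP P p \<equiv> gps_departure L a u P (gps P) p"

lemma Cpos: "C > 0" using N1 rpos by simp

lemma finarr: "finite {q \<in> P. u q = k \<and> a q \<le> t}"
  by (rule finite_subset[OF _ fin[of t]]) auto

lemma sys: "gpsys N r \<phi> K (AW P) (gps P)"
proof
  show "AW P k s \<le> AW P k t" if "s \<le> t" for k s t
    unfolding arrived_work_def using Lpos that
    by (auto intro!: card_mono finarr)
  show "0 \<le> AW P k t" for k t unfolding arrived_work_def using Lpos by simp
qed (use N1 rpos phipos isg in auto)

lemma rlc:
  assumes t0: "0 \<le> t0"
  shows "\<exists>e>0. \<forall>k<K. \<forall>t. t0 \<le> t \<and> t < t0 + e \<longrightarrow> AW P k t = AW P k t0"
proof -
  define E where "E = (\<lambda>x. a x - t0) ` {p. a p \<le> t0 + 1 \<and> t0 < a p}"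
  have finE: "finite E" unfolding E_def by (rule finite_imageI, rule finite_subset[OF _ fin[of "t0+1"]]) auto
  define e where "e = Min (insert 1 E)"
  have epos: "e > 0" unfolding e_def using finE by (subst Min_gr_iff) (auto simp: E_def)
  have ele: "e \<le> 1" unfolding e_def using finE by (intro Min_le) auto
  have eleE: "e \<le> a p - t0" if "a p \<le> t0 + 1" "t0 < a p" for p
    unfolding e_def using finE that by (intro Min_le) (auto simp: E_def)
  have "AW P k t = AW P k t0" if "t0 \<le> t" "t < t0 + e" for k t
  proof -
    have "{q \<in> P. u q = k \<and> a q \<le> t} = {q \<in> P. u q = k \<and> a q \<le> t0}"
    proof (rule set_eqI, rule iffI)
      fix q assume q: "q \<in> {q \<in> P. u q = k \<and> a q \<le> t}"
      show "q \<in> {q \<in> P. u q = k \<and> a q \<le> t0}"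
      proof (rule ccontr)
        assume "q \<notin> {q \<in> P. u q = k \<and> a q \<le> t0}"
        then have "t0 < a q" using q by auto
        moreover have "a q \<le> t0 + 1" using q that ele by auto
        ultimately have "e \<le> a q - t0" by (rule eleE[rotated])
        then show False using q that by auto
      qed
    qed (use that in auto)
    then show ?thesis unfolding arrived_work_def by simp
  qed
  then show ?thesis using epos by blast
qed

lemma fifo_fin: "finite {q \<in> P. u q = u p \<and> (a q < a p \<or> (a q = a p \<and> q \<le> p))}"
  by (rule finite_subset[OF _ fin[of "a p"]]) auto

lemma fifo_ge1: "p \<in> P \<Longrightarrow> fifo_pos a u P p \<ge> 1"
  unfolding fifo_pos_def using fifo_fin[of P p]
  by (metis (mono_tags, lifting) One_nat_def Suc_leI card_gt_0_iff empty_iff mem_Collect_eq order_refl)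

lemma TG_pos: "p \<in> P \<Longrightarrow> TG P p > 0"
  using fifo_ge1[of p P] Lpos by simp

lemma TG_le_AW: assumes "p \<in> P" "a p \<le> t" shows "TG P p \<le> AW P (u p) t"
proof -
  have "fifo_pos a u P p \<le> card {q \<in> P. u q = u p \<and> a q \<le> t}"
    unfolding fifo_pos_def using assms by (intro card_mono finarr) auto
  then show ?thesis unfolding arrived_work_def using Lpos by simp
qed

lemma dep_eq: "DP P p = gpsys.dep (gps P) (TG P p) (u p)"
  unfolding gps_departure_def gpsys.dep_def[OF sys] by simp

lemma DP_props:
  assumes p: "p \<in> P"
  shows "0 \<le> DP P p" "gps P (u p) (DP P p) = TG P p"
    "\<And>t. 0 \<le> t \<Longrightarrow> t < DP P p \<Longrightarrow> gps P (u p) t < TG P p"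
    "\<And>t. 0 \<le> t \<Longrightarrow> TG P p \<le> gps P (u p) t \<Longrightarrow> DP P p \<le> t"
    "a p \<le> DP P p"
proof -
  interpret G: gpsys N r \<phi> K "AW P" "gps P" by (rule sys)
  have ex: "\<exists>t\<ge>0. TG P p \<le> gps P (u p) t"
    by (rule G.live[OF uK apos]) (rule TG_le_AW[OF p])
  note dp = G.dep_props[OF uK ex TG_pos[OF p], folded dep_eq]
  show "0 \<le> DP P p" "gps P (u p) (DP P p) = TG P p"
    "\<And>t. 0 \<le> t \<Longrightarrow> t < DP P p \<Longrightarrow> gps P (u p) t < TG P p"
    "\<And>t. 0 \<le> t \<Longrightarrow> TG P p \<le> gps P (u p) t \<Longrightarrow> DP P p \<le> t"
    using dp by auto
  show "a p \<le> DP P p"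
  proof (rule ccontr)
    assume lt: "\<not> a p \<le> DP P p"
    have sub: "{q \<in> P. u q = u p \<and> a q \<le> DP P p} \<subseteq>
       {q \<in> P. u q = u p \<and> (a q < a p \<or> (a q = a p \<and> q \<le> p))} - {p}"
      using lt by auto
    have "card {q \<in> P. u q = u p \<and> a q \<le> DP P p} \<le> card ({q \<in> P. u q = u p \<and> (a q < a p \<or> (a q = a p \<and> q \<le> p))} - {p})"
      by (rule card_mono[OF _ sub]) (use fifo_fin[of P p] in auto)
    also have "\<dots> = fifo_pos a u P p - 1" unfolding fifo_pos_def
      using p fifo_fin[of P p] by (subst card_Diff_singleton) auto
    finally have c: "card {q \<in> P. u q = u p \<and> a q \<le> DP P p} \<le> fifo_pos a u P p - 1" .
    have "gps P (u p) (DP P p) \<le> AW P (u p) (DP P p)" by (rule G.S_le_A[OF uK dp(1)])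
    also have "\<dots> \<le> real (fifo_pos a u P p - 1) * L"
      unfolding arrived_work_def using c Lpos by (simp add: mult_right_mono)
    also have "\<dots> < TG P p" using fifo_ge1[OF p] Lpos by (simp add: of_nat_diff)
    finally show False using dp(2) by simp
  qed
qed

end



context model begin

lemma fifo_eq: assumes "a y \<le> \<tau>" shows "fifo_pos a u {x. a x \<le> \<tau>} y = fifo_pos a u UNIV y"
proof -
  have "{q \<in> {x. a x \<le> \<tau>}. u q = u y \<and> (a q < a y \<or> (a q = a y \<and> q \<le> y))}
      = {q \<in> UNIV. u q = u y \<and> (a q < a y \<or> (a q = a y \<and> q \<le> y))}" using assms by auto
  then show ?thesis unfolding fifo_pos_def by simp
qed

lemma agree:
  assumes "0 \<le> \<tau>" "k < K" "0 \<le> t" "t \<le> \<tau>"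
  shows "gps UNIV k t = gps {x. a x \<le> \<tau>} k t"
proof -
  have eqA: "AW {x. a x \<le> \<tau>} k t = AW UNIV k t" if "t \<le> \<tau>" for k t
  proof -
    have "{q \<in> {x. a x \<le> \<tau>}. u q = k \<and> a q \<le> t} = {q \<in> UNIV. u q = k \<and> a q \<le> t}" using that by auto
    then show ?thesis unfolding arrived_work_def by simp
  qed
  have "\<forall>k<K. \<forall>t. 0 \<le> t \<and> t \<le> \<tau> \<longrightarrow> gps UNIV k t = gps {x. a x \<le> \<tau>} k t"
    by (rule gps_agree[OF sys sys]) (use eqA rlc in auto)
  then show ?thesis using assms by auto
qed

lemma DP_agree:
  assumes tau: "0 \<le> \<tau>" and y: "a y \<le> \<tau>"
    and le: "DP UNIV y \<le> \<tau> \<or> DP {x. a x \<le> \<tau>} y \<le> \<tau>"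
  shows "DP {x. a x \<le> \<tau>} y = DP UNIV y"
proof -
  let ?P = "{x. a x \<le> \<tau>}"
  have yP: "y \<in> ?P" using y by simp
  have T: "TG ?P y = TG UNIV y" using fifo_eq[OF y] by simp
  note U = DP_props[of y UNIV, simplified]
  note H = DP_props[OF yP, unfolded T]
  have ag: "gps UNIV (u y) t = gps ?P (u y) t" if "0 \<le> t" "t \<le> \<tau>" for t
    using agree[OF tau uK that] .
  show ?thesis
  proof (cases "DP UNIV y \<le> \<tau>")
    case True
    have a1: "DP ?P y \<le> DP UNIV y" using H(4)[OF U(1)] U(2) ag[OF U(1) True] by simp
    show ?thesis
    proof (rule ccontr)
      assume "DP ?P y \<noteq> DP UNIV y"
      then have lt: "DP ?P y < DP UNIV y" using a1 by simp
      have "gps UNIV (u y) (DP ?P y) < TG UNIV y" using U(3)[OF H(1) lt] .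
      moreover have "gps UNIV (u y) (DP ?P y) = TG UNIV y" using ag[OF H(1)] lt True H(2) by simp
      ultimately show False by simp
    qed
  next
    case False
    then have True: "DP ?P y \<le> \<tau>" using le by simp
    have a1: "DP UNIV y \<le> DP ?P y" using U(4)[OF H(1)] H(2) ag[OF H(1) True] by simp
    then show ?thesis using False True by simp
  qed
qed

lemma order_pres:
  assumes tau: "0 \<le> \<tau>" and q: "a q \<le> \<tau>" and x: "a x \<le> \<tau>"
    and hd: "DP {y. a y \<le> \<tau>} q \<le> DP {y. a y \<le> \<tau>} x"
  shows "DP UNIV q \<le> DP UNIV x"
proof -
  let ?P = "{y. a y \<le> \<tau>}"
  have qP: "q \<in> ?P" and xP: "x \<in> ?P" using q x by auto
  note Uq = DP_props[of q UNIV, simplified] and Ux = DP_props[of x UNIV, simplified]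
  note Hq = DP_props[OF qP, unfolded fifo_eq[OF q]] and Hx = DP_props[OF xP, unfolded fifo_eq[OF x]]
  have ag: "gps UNIV k t = gps ?P k t" if "k < K" "0 \<le> t" "t \<le> \<tau>" for k t
    using agree[OF tau that] .
  show ?thesis
  proof (cases "u q = u x")
    case same: True
    show ?thesis
    proof (cases "TG UNIV q \<le> TG UNIV x")
      case True
      then show ?thesis using Uq(4)[OF Ux(1)] Ux(2) same by simp
    next
      case False
      have "DP ?P x \<le> DP ?P q" using Hx(4)[OF Hq(1)] Hq(2) same False by simp
      then have "DP ?P x = DP ?P q" using hd by simp
      then have "TG UNIV q = TG UNIV x" using Hq(2) Hx(2) same by simp
      then show ?thesis using False by linarith
    qed
  next
    case diff: False
    show ?thesis
    proof (rule ccontr)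
      assume "\<not> ?thesis"
      then have lt: "DP UNIV x < DP UNIV q" by simp
      show False
      proof (cases "DP UNIV x \<le> \<tau>")
        case True
        then have "DP ?P x = DP UNIV x" using DP_agree[OF tau x] by simp
        then have "DP ?P q \<le> \<tau>" using hd True by simp
        then have "DP ?P q = DP UNIV q" using DP_agree[OF tau q] by simp
        then show False using hd lt \<open>DP ?P x = DP UNIV x\<close> by simp
      next
        case Dx: False
        have Hq_gt: "\<tau> < DP ?P q"
        proof (rule ccontr)
          assume "\<not> \<tau> < DP ?P q"
          then have "DP ?P q = DP UNIV q" using DP_agree[OF tau q] by simp
          then show False using lt Dx \<open>\<not> \<tau> < DP ?P q\<close> by simp
        qed
        let ?k = "u q" and ?j = "u x"
        have k: "?k < K" and j: "?j < K" by (rule uK)+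
        have r1: "(gps UNIV ?j (DP UNIV x) - gps UNIV ?j \<tau>) / \<phi> ?j
                = (gps UNIV ?k (DP UNIV x) - gps UNIV ?k \<tau>) / \<phi> ?k"
        proof (rule gpsys.norm_eq[OF sys j k tau])
          show "\<tau> \<le> DP UNIV x" using Dx by simp
          fix s assume s: "\<tau> \<le> s" "s < DP UNIV x"
          have s0: "0 \<le> s" using s tau by simp
          have "gps UNIV ?j s < TG UNIV x" using Ux(3)[OF s0 s(2)] .
          moreover have "TG UNIV x \<le> AW UNIV ?j s" using TG_le_AW[of x UNIV s] x s by simp
          moreover have "gps UNIV ?k s < TG UNIV q" using Uq(3)[OF s0] s lt by simp
          moreover have "TG UNIV q \<le> AW UNIV ?k s" using TG_le_AW[of q UNIV s] q s by simp
          ultimately show "gps UNIV ?j s < AW UNIV ?j s \<and> gps UNIV ?k s < AW UNIV ?k s" by simp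
        qed
        have r2: "gps UNIV ?k (DP UNIV x) < TG UNIV q" using Uq(3)[OF Ux(1) lt] .
        have h1: "(gps ?P ?k (DP ?P q) - gps ?P ?k \<tau>) / \<phi> ?k
                = (gps ?P ?j (DP ?P q) - gps ?P ?j \<tau>) / \<phi> ?j"
        proof (rule gpsys.norm_eq[OF sys k j tau])
          show "\<tau> \<le> DP ?P q" using Hq_gt by simp
          fix s assume s: "\<tau> \<le> s" "s < DP ?P q"
          have s0: "0 \<le> s" using s tau by simp
          have "gps ?P ?k s < TG UNIV q" using Hq(3)[OF s0 s(2)] .
          moreover have "TG ?P q \<le> AW ?P ?k s" using TG_le_AW[OF qP, of s] q s by simp
          moreover have "gps ?P ?j s < TG UNIV x" using Hx(3)[OF s0] s hd by simp
          moreover have "TG ?P x \<le> AW ?P ?j s" using TG_le_AW[OF xP, of s] x s by simp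
          ultimately show "gps ?P ?k s < AW ?P ?k s \<and> gps ?P ?j s < AW ?P ?j s"
            unfolding fifo_eq[OF q] fifo_eq[OF x] by simp
        qed
        have h2: "gps ?P ?j (DP ?P q) \<le> TG UNIV x"
        proof (cases "DP ?P q < DP ?P x")
          case True then show ?thesis using Hx(3)[OF Hq(1)] by simp
        next
          case False then have "DP ?P q = DP ?P x" using hd by simp
          then show ?thesis using Hx(2) by simp
        qed
        have e1: "gps ?P ?k \<tau> = gps UNIV ?k \<tau>" "gps ?P ?j \<tau> = gps UNIV ?j \<tau>"
          using ag[OF k tau] ag[OF j tau] by auto
        have pk: "\<phi> ?k > 0" and pj: "\<phi> ?j > 0" using phipos k j by auto
        define X where "X = (TG UNIV x - gps UNIV ?j \<tau>) / \<phi> ?j"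
        define Y where "Y = (TG UNIV q - gps UNIV ?k \<tau>) / \<phi> ?k"
        have "X < Y"
        proof -
          have "X = (gps UNIV ?k (DP UNIV x) - gps UNIV ?k \<tau>) / \<phi> ?k"
            using r1 Ux(2) unfolding X_def by simp
          also have "\<dots> < Y" unfolding Y_def using r2 pk by (intro divide_strict_right_mono) auto
          finally show ?thesis .
        qed
        moreover have "Y \<le> X"
        proof -
          have "Y = (gps ?P ?j (DP ?P q) - gps UNIV ?j \<tau>) / \<phi> ?j"
            using h1 Hq(2) e1 unfolding Y_def by simp
          also have "\<dots> \<le> X" unfolding X_def using h2 pj by (intro divide_right_mono) auto
          finally show ?thesis .
        qed
        ultimately show False by simp
      qed
    qed
  qed
qed

end



context model begin

lemma capacity:
  assumes finX: "finite X" and pX: "p \<in> X" and t0: "0 \<le> t0"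
    and arr: "\<And>x. x \<in> X \<Longrightarrow> t0 \<le> a x"
    and dle: "\<And>x. x \<in> X \<Longrightarrow> DP UNIV x \<le> DP UNIV p"
  shows "real (card X) * L \<le> C * (DP UNIV p - t0)"
proof -
  interpret G: gpsys N r \<phi> K "AW UNIV" "gps UNIV" by (rule sys)
  define d where "d = DP UNIV p"
  have td: "t0 \<le> d" using arr[OF pX] DP_props(5)[of p UNIV] unfolding d_def by simp
  have d0: "0 \<le> d" using t0 td by simp
  define Xk where "Xk k = {x \<in> X. u x = k}" for k
  have per: "real (card (Xk k)) * L \<le> gps UNIV k d - gps UNIV k t0" if k: "k < K" for k
  proof (cases "Xk k = {}")
    case True then show ?thesis using G.mono[OF k t0 td] by simp
  next
    case False
    have finXk: "finite (Xk k)" using finX unfolding Xk_def by auto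
    define ma where "ma = Max (a ` Xk k)"
    define Xm where "Xm = {x \<in> Xk k. a x = ma}"
    have ma_in: "ma \<in> a ` Xk k" unfolding ma_def using finXk False by (intro Max_in) auto
    have finXm: "finite Xm" using finXk unfolding Xm_def by auto
    have neXm: "Xm \<noteq> {}" using ma_in unfolding Xm_def by auto
    define m where "m = Max Xm"
    have mXm: "m \<in> Xm" unfolding m_def using finXm neXm by (rule Max_in)
    have mX: "m \<in> X" "u m = k" "a m = ma" using mXm unfolding Xm_def Xk_def by auto
    have maxp: "a y < a m \<or> (a y = a m \<and> y \<le> m)" if y: "y \<in> Xk k" for y
    proof -
      have "a y \<le> ma" unfolding ma_def using finXk y by (intro Max_ge) auto
      moreover have "a y = ma \<Longrightarrow> y \<le> m" unfolding m_def using finXm y by (intro Max_ge) (auto simp: Xm_def)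
      ultimately show ?thesis using mX by auto
    qed
    define E where "E = {q. u q = k \<and> a q < t0}"
    have finE: "finite E" unfolding E_def by (rule finite_subset[OF _ fin[of t0]]) auto
    have sub: "E \<union> Xk k \<subseteq> {q \<in> UNIV. u q = u m \<and> (a q < a m \<or> (a q = a m \<and> q \<le> m))}"
      using maxp arr mX unfolding E_def Xk_def by fastforce
    have disj: "E \<inter> Xk k = {}" using arr unfolding E_def Xk_def by force
    have "card E + card (Xk k) = card (E \<union> Xk k)" using card_Un_disjoint[OF finE finXk disj] by simp
    also have "\<dots> \<le> fifo_pos a u UNIV m" unfolding fifo_pos_def
      by (rule card_mono[OF fifo_fin sub])
    finally have c1: "card E + card (Xk k) \<le> fifo_pos a u UNIV m" .
    have "gps UNIV k d \<ge> TG UNIV m"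
    proof -
      have "DP UNIV m \<le> d" using dle[OF mX(1)] unfolding d_def .
      then have "gps UNIV k (DP UNIV m) \<le> gps UNIV k d"
        using G.mono[OF k DP_props(1)[of m UNIV]] by simp
      then show ?thesis using DP_props(2)[of m UNIV] mX by simp
    qed
    moreover have "gps UNIV k t0 \<le> real (card E) * L"
    proof (rule G.S_le_strict[OF k t0])
      show "0 \<le> real (card E) * L" using Lpos by simp
      fix s assume s: "0 \<le> s" "s < t0"
      have "card {q \<in> UNIV. u q = k \<and> a q \<le> s} \<le> card E"
        by (rule card_mono[OF finE]) (use s in \<open>auto simp: E_def\<close>)
      then show "AW UNIV k s \<le> real (card E) * L" unfolding arrived_work_def using Lpos by simp
    qed
    moreover have "real (card E) * L + real (card (Xk k)) * L \<le> TG UNIV m"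
      using c1 Lpos by (simp add: distrib_right[symmetric] mult_right_mono del: of_nat_add)
    ultimately show ?thesis by linarith
  qed
  have cardX: "card X = (\<Sum>k<K. card (Xk k))"
  proof -
    have "X = (\<Union>k\<in>{..<K}. Xk k)" unfolding Xk_def using uK by auto
    moreover have "card (\<Union>k\<in>{..<K}. Xk k) = (\<Sum>k<K. card (Xk k))"
      by (rule card_UN_disjoint) (use finX in \<open>auto simp: Xk_def\<close>)
    ultimately show ?thesis by simp
  qed
  have "real (card X) * L = (\<Sum>k<K. real (card (Xk k)) * L)"
    unfolding cardX by (simp add: sum_distrib_right)
  also have "\<dots> \<le> (\<Sum>k<K. gps UNIV k d - gps UNIV k t0)"
    by (rule sum_mono) (use per in auto)
  also have "\<dots> \<le> C * (d - t0)" by (rule G.sum_lip[OF t0 td])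
  finally show ?thesis unfolding d_def .
qed

end



context model begin

context
  fixes M :: nat and tau :: "nat \<Rightarrow> real" and F :: "nat \<Rightarrow> 'p set"
  assumes M1: "M \<ge> 1" and mp: "is_mpgps N r L M a u gps tau F"
begin

abbreviation ee where "ee j \<equiv> prev_end N r L tau F j"
abbreviation QQ where "QQ j \<equiv> mpgps_queue a F j (tau j)"
abbreviation HD where "HD j \<equiv> DP {x. a x \<le> tau j}"

lemma spec_j: "if (\<exists>t\<ge>ee j. mpgps_queue a F j t \<noteq> {})
            then ee j \<le> tau j \<and> QQ j \<noteq> {}
                 \<and> (\<forall>t. ee j \<le> t \<and> t < tau j \<longrightarrow> mpgps_queue a F j t = {})
                 \<and> F j \<subseteq> QQ j \<and> card (F j) = min M (card (QQ j))
                 \<and> (\<forall>p\<in>F j. \<forall>q\<in>QQ j - F j. HD j p \<le> HD j q)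
            else F j = {}"
  using mp unfolding is_mpgps_def Let_def by blast

lemma finQ: "finite (mpgps_queue a F j t)"
  unfolding mpgps_queue_def by (rule finite_subset[OF _ fin[of t]]) auto

lemma branch:
  assumes "F j \<noteq> {}"
  shows "ee j \<le> tau j" "QQ j \<noteq> {}"
    "\<And>t. ee j \<le> t \<Longrightarrow> t < tau j \<Longrightarrow> mpgps_queue a F j t = {}"
    "F j \<subseteq> QQ j" "card (F j) = min M (card (QQ j))"
    "\<And>p q. p \<in> F j \<Longrightarrow> q \<in> QQ j - F j \<Longrightarrow> HD j p \<le> HD j q"
proof -
  have "\<exists>t\<ge>ee j. mpgps_queue a F j t \<noteq> {}" using spec_j[of j] assms by (auto split: if_splits)
  then have c: "ee j \<le> tau j \<and> QQ j \<noteq> {}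
                 \<and> (\<forall>t. ee j \<le> t \<and> t < tau j \<longrightarrow> mpgps_queue a F j t = {})
                 \<and> F j \<subseteq> QQ j \<and> card (F j) = min M (card (QQ j))
                 \<and> (\<forall>p\<in>F j. \<forall>q\<in>QQ j - F j. HD j p \<le> HD j q)" using spec_j[of j] by simp
  then show "ee j \<le> tau j" "QQ j \<noteq> {}"
    "\<And>t. ee j \<le> t \<Longrightarrow> t < tau j \<Longrightarrow> mpgps_queue a F j t = {}"
    "F j \<subseteq> QQ j" "card (F j) = min M (card (QQ j))"
    "\<And>p q. p \<in> F j \<Longrightarrow> q \<in> QQ j - F j \<Longrightarrow> HD j p \<le> HD j q" by blast+
qed

lemma finF: "finite (F j)"
proof (cases "F j = {}")
  case False then show ?thesis using branch(4)[OF False] finQ finite_subset by blast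
qed simp

lemma cardF: "card (F j) \<le> M"
proof (cases "F j = {}")
  case False then show ?thesis using branch(5)[OF False] by simp
qed simp

lemma inF: assumes "x \<in> F j" shows "a x \<le> tau j" "\<And>i. i < j \<Longrightarrow> x \<notin> F i"
  using branch(4)[of j] assms unfolding mpgps_queue_def by auto

lemma tau_nonneg: "F j \<noteq> {} \<Longrightarrow> 0 \<le> tau j"
  using inF(1) apos by (meson all_not_in_conv order_trans)

lemma prefix: assumes "F h \<noteq> {}" "j \<le> h" shows "F j \<noteq> {}"
proof
  assume Fj: "F j = {}"
  have nex: "\<not> (\<exists>t\<ge>ee j. mpgps_queue a F j t \<noteq> {})"
  proof
    assume ex: "\<exists>t\<ge>ee j. mpgps_queue a F j t \<noteq> {}"
    then have "card (F j) = min M (card (QQ j))" "QQ j \<noteq> {}" using spec_j[of j] by auto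
    moreover have "card (QQ j) \<ge> 1" using \<open>QQ j \<noteq> {}\<close> finQ[of j "tau j"]
      by (simp add: Suc_le_eq card_gt_0_iff)
    ultimately show False using Fj M1 by simp
  qed
  have jh: "j < h" using Fj assms by (cases "j = h") auto
  have allF: "\<exists>i<j. x \<in> F i" for x
  proof -
    let ?t = "max (ee j) (a x)"
    have "mpgps_queue a F j ?t = {}" using nex by auto
    then have "x \<notin> mpgps_queue a F j ?t" by simp
    moreover have "a x \<le> ?t" by simp
    ultimately show ?thesis unfolding mpgps_queue_def by auto
  qed
  have "mpgps_queue a F h t = {}" for t
  proof -
    have "x \<in> (\<Union>h'<h. F h')" for x using allF[of x] jh by (meson UN_iff lessThan_iff order.strict_trans)
    then show ?thesis unfolding mpgps_queue_def by auto
  qed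
  then have "F h = {}" using spec_j[of h] by auto
  then show False using assms by simp
qed

lemma end_eq: "batch_end N r L tau F j = tau j + real (card (F j)) * L / C"
  unfolding batch_end_def by simp

lemma ee_Suc: "ee (Suc j) = batch_end N r L tau F j"
  unfolding prev_end_def by simp

lemma ee_0: "ee 0 = 0" unfolding prev_end_def by simp

theorem main:
  assumes pF: "p \<in> F h"
  shows "batch_end N r L tau F h - DP UNIV p \<le> (2 * real M - 1) * L / C"
proof -
  have Fh: "F h \<noteq> {}" using pF by auto
  have Fj: "F j \<noteq> {}" if "j \<le> h" for j using prefix[OF Fh that] .
  define J where "J = {j. j \<le> h \<and> (j = 0 \<or> tau j \<noteq> ee j)}"
  have finJ: "finite J" unfolding J_def by auto
  have J0: "0 \<in> J" unfolding J_def by auto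
  define j0 where "j0 = Max J"
  have j0J: "j0 \<in> J" unfolding j0_def using finJ J0 by (intro Max_in) auto
  have j0h: "j0 \<le> h" using j0J unfolding J_def by auto
  have noidle: "tau j = ee j" if "j0 < j" "j \<le> h" for j
  proof (rule ccontr)
    assume "tau j \<noteq> ee j"
    then have "j \<in> J" using that unfolding J_def by auto
    then have "j \<le> j0" unfolding j0_def by (rule Max_ge[OF finJ])
    then show False using that by simp
  qed
  have chain0: "tau (s + d) = tau s + real (\<Sum>i\<in>{s..<s + d}. card (F i)) * L / C"
    if "j0 \<le> s" "s + d \<le> h" for s d
    using that(2)
  proof (induction d)
    case 0 then show ?case by simp
  next
    case (Suc d)
    have "tau (s + Suc d) = ee (Suc (s + d))" using noidle[of "s + Suc d"] Suc.prems that(1) by simp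
    also have "\<dots> = tau (s + d) + real (card (F (s + d))) * L / C" using ee_Suc end_eq by simp
    also have "tau (s + d) = tau s + real (\<Sum>i\<in>{s..<s + d}. card (F i)) * L / C" using Suc by simp
    finally show ?case by (simp add: sum.atLeastLessThan_Suc add_divide_distrib distrib_right)
  qed
  have chain: "tau j = tau s + real (\<Sum>i\<in>{s..<j}. card (F i)) * L / C"
    if "j0 \<le> s" "s \<le> j" "j \<le> h" for s j
    using chain0[of s "j - s"] that by simp
  have arr0: "tau j0 \<le> a x" if "j0 \<le> j" "j \<le> h" "x \<in> F j" for j x
  proof (cases "j0 = 0 \<and> tau 0 = ee 0")
    case True then show ?thesis using apos ee_0 by simp
  next
    case False
    then have ne: "tau j0 \<noteq> ee j0" using j0J unfolding J_def by auto
    have Fj0: "F j0 \<noteq> {}" using Fj j0h by simp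
    have lt: "ee j0 < tau j0" using branch(1)[OF Fj0] ne by simp
    show ?thesis
    proof (rule ccontr)
      assume "\<not> tau j0 \<le> a x"
      define t where "t = max (ee j0) (a x)"
      have "mpgps_queue a F j0 t = {}" using branch(3)[OF Fj0, of t] lt \<open>\<not> tau j0 \<le> a x\<close>
        unfolding t_def by auto
      moreover have "x \<in> mpgps_queue a F j0 t"
        unfolding mpgps_queue_def t_def using inF(2)[OF that(3)] that(1) by auto
      ultimately show False by simp
    qed
  qed
  have Cp: "C > 0" by (rule Cpos)
  define G where "G = {g. j0 \<le> g \<and> g < h \<and> (\<exists>q\<in>F g. DP UNIV q > DP UNIV p)}"
  have finG: "finite G" unfolding G_def by auto
  have count: "real (1 + (\<Sum>i\<in>{s..<h}. card (F i))) * L \<le> C * (DP UNIV p - t0)"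
    if s: "s \<le> h" and t0: "0 \<le> t0"
      and ar: "\<And>x j. s \<le> j \<Longrightarrow> j < h \<Longrightarrow> x \<in> F j \<Longrightarrow> t0 \<le> a x"
      and arp: "t0 \<le> a p"
      and dl: "\<And>x j. s \<le> j \<Longrightarrow> j < h \<Longrightarrow> x \<in> F j \<Longrightarrow> DP UNIV x \<le> DP UNIV p" for s t0
  proof -
    define X where "X = insert p (\<Union>j\<in>{s..<h}. F j)"
    have finU: "finite (\<Union>j\<in>{s..<h}. F j)" using finF by auto
    have pnot: "p \<notin> (\<Union>j\<in>{s..<h}. F j)" using inF(2)[OF pF] by auto
    have "card X = 1 + card (\<Union>j\<in>{s..<h}. F j)" unfolding X_def using finU pnot by simp
    also have "card (\<Union>j\<in>{s..<h}. F j) = (\<Sum>i\<in>{s..<h}. card (F i))"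
    proof (rule card_UN_disjoint)
      show "\<forall>i\<in>{s..<h}. \<forall>j\<in>{s..<h}. i \<noteq> j \<longrightarrow> F i \<inter> F j = {}"
      proof (intro ballI impI)
        fix i j assume "i \<in> {s..<h}" "j \<in> {s..<h}" "i \<noteq> j"
        then have "i < j \<or> j < i" by auto
        then show "F i \<inter> F j = {}" using inF(2) by blast
      qed
    qed (use finF in auto)
    finally have cX: "card X = 1 + (\<Sum>i\<in>{s..<h}. card (F i))" .
    have "real (card X) * L \<le> C * (DP UNIV p - t0)"
    proof (rule capacity)
      show "finite X" unfolding X_def using finU by simp
      show "p \<in> X" unfolding X_def by simp
      show "0 \<le> t0" by (rule t0)
      show "t0 \<le> a x" if "x \<in> X" for x
        using that arp ar unfolding X_def by auto
      show "DP UNIV x \<le> DP UNIV p" if "x \<in> X" for x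
        using that dl unfolding X_def by auto
    qed
    then show ?thesis using cX by simp
  qed
  have ch: "real (card (F h)) \<le> real M" using cardF by simp
  show ?thesis
  proof (cases "G = {}")
    case True
    have t0: "0 \<le> tau j0" using tau_nonneg Fj j0h by simp
    have c: "real (1 + (\<Sum>i\<in>{j0..<h}. card (F i))) * L \<le> C * (DP UNIV p - tau j0)"
    proof (rule count[OF j0h t0])
      show "tau j0 \<le> a x" if "j0 \<le> j" "j < h" "x \<in> F j" for x j using arr0 that by simp
      show "tau j0 \<le> a p" using arr0[OF j0h _ pF] by simp
      show "DP UNIV x \<le> DP UNIV p" if "j0 \<le> j" "j < h" "x \<in> F j" for x j
        using True that unfolding G_def by force
    qed
    have th: "tau h = tau j0 + real (\<Sum>i\<in>{j0..<h}. card (F i)) * L / C"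
      using chain[of j0 h] j0h by simp
    define W where "W = real (\<Sum>i\<in>{j0..<h}. card (F i))"
    have "C * (batch_end N r L tau F h - DP UNIV p)
        = C * tau h + real (card (F h)) * L - C * DP UNIV p"
      using Cp N1 rpos by (simp add: end_eq field_simps)
    also have "\<dots> = C * tau j0 + W * L + real (card (F h)) * L - C * DP UNIV p"
      using Cp N1 rpos by (simp add: th W_def field_simps)
    also have "\<dots> \<le> (real (card (F h)) - 1) * L" using c unfolding W_def by (simp add: algebra_simps)
    also have "\<dots> \<le> (2 * real M - 1) * L" using ch Lpos M1 by (intro mult_right_mono) auto
    finally show ?thesis using Cp by (simp add: le_divide_eq mult.commute)
  next
    case False
    define g where "g = Max G"
    have gG: "g \<in> G" unfolding g_def using finG False by (rule Max_in)
    then obtain q where q: "q \<in> F g" "DP UNIV q > DP UNIV p" and gj: "j0 \<le> g" "g < h"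
      unfolding G_def by auto
    have Fg: "F g \<noteq> {}" using q by auto
    have t0: "0 \<le> tau g" using tau_nonneg[OF Fg] .
    have after: "DP UNIV x \<le> DP UNIV p" if "Suc g \<le> j" "j < h" "x \<in> F j" for x j
    proof (rule ccontr)
      assume "\<not> ?thesis"
      then have "j \<in> G" using that gj unfolding G_def by force
      then have "j \<le> g" unfolding g_def by (rule Max_ge[OF finG])
      then show False using that by simp
    qed
    have c: "real (1 + (\<Sum>i\<in>{Suc g..<h}. card (F i))) * L \<le> C * (DP UNIV p - tau g)"
    proof (rule count)
      show "Suc g \<le> h" using gj by simp
      show "0 \<le> tau g" by (rule t0)
      show "DP UNIV x \<le> DP UNIV p" if "Suc g \<le> j" "j < h" "x \<in> F j" for x j
        using after that .
      have gen: "tau g \<le> a x" if j: "Suc g \<le> j" "j \<le> h" "x \<in> F j" and dx: "DP UNIV x \<le> DP UNIV p" for x j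
      proof (rule ccontr)
        assume "\<not> tau g \<le> a x"
        then have ax: "a x \<le> tau g" by simp
        have xnot: "x \<notin> F i" if "i \<le> g" for i using inF(2)[OF j(3)] that j by simp
        have "x \<in> QQ g - F g" unfolding mpgps_queue_def using ax xnot by auto
        then have "HD g q \<le> HD g x" using branch(6)[OF Fg q(1)] by blast
        moreover have "a q \<le> tau g" using inF(1)[OF q(1)] .
        ultimately have "DP UNIV q \<le> DP UNIV x" using order_pres[OF t0 _ ax] by blast
        then show False using dx q(2) by simp
      qed
      show "tau g \<le> a x" if j: "Suc g \<le> j" "j < h" "x \<in> F j" for x j
        using gen[of j x] after[of j x] j by simp
      show "tau g \<le> a p" using gen[of h p] pF gj by simp
    qed
    have th: "tau h = tau g + real (\<Sum>i\<in>{g..<h}. card (F i)) * L / C"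
      using chain[of g h] gj by simp
    have split: "(\<Sum>i\<in>{g..<h}. card (F i)) = card (F g) + (\<Sum>i\<in>{Suc g..<h}. card (F i))"
      using gj by (simp add: sum.atLeast_Suc_lessThan)
    define W where "W = real (\<Sum>i\<in>{Suc g..<h}. card (F i))"
    have cg: "real (card (F g)) \<le> real M" using cardF by simp
    have "C * (batch_end N r L tau F h - DP UNIV p)
        = C * tau h + real (card (F h)) * L - C * DP UNIV p"
      using Cp N1 rpos by (simp add: end_eq field_simps)
    also have "\<dots> = C * tau g + real (card (F g)) * L + W * L + real (card (F h)) * L - C * DP UNIV p"
      using Cp N1 rpos by (simp add: th split W_def field_simps)
    also have "\<dots> \<le> (real (card (F g)) + real (card (F h)) - 1) * L" using c unfolding W_def by (simp add: algebra_simps)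
    also have "\<dots> \<le> (2 * real M - 1) * L" using ch cg Lpos by (intro mult_right_mono) auto
    finally show ?thesis using Cp by (simp add: le_divide_eq mult.commute)
  qed
qed

end
end


theorem theorem1:
  fixes K N M :: nat and r L :: real and \<phi> :: "nat \<Rightarrow> real"
    and a :: "'p::linorder \<Rightarrow> real" and u :: "'p \<Rightarrow> nat"
    and gps :: "'p set \<Rightarrow> nat \<Rightarrow> real \<Rightarrow> real"
    and tau :: "nat \<Rightarrow> real" and F :: "nat \<Rightarrow> 'p set"
  assumes "N \<ge> 1" and "r > 0" and "L > 0" and "M \<ge> 1"
    and "\<And>k. k < K \<Longrightarrow> \<phi> k > 0"
    and "\<And>p. u p < K" and "\<And>p. a p \<ge> 0"
    and "\<And>t. finite {p. a p \<le> t}"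
    and "\<And>P. is_gps N r \<phi> K (arrived_work L a u P) (gps P)"
    and "is_mpgps N r L M a u gps tau F"
  shows "\<forall>h. \<forall>p\<in>F h.
           batch_end N r L tau F h - gps_departure L a u UNIV (gps UNIV) p
             \<le> (2 * real M - 1) * L / (real N * r)"
proof -
  interpret model K N r L \<phi> a u gps
    by (unfold_locales) (use assms in auto)
  show ?thesis using main[OF assms(4) assms(10)] by blast
qed

end
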